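(* For any number $c$ with $0<c<\min\{k_1|L_0|^2/2,\ k_2(\mu-|A_0|)^2/2\}$, the set of all critical points of $V$ in $V^{-1}([0,c])$ equals $V^{-1}(0)=\{(x,v)\in\mathbb R^3_0\times\mathbb R^3: L(x,v)=L_0,\ A(x,v)=A_0\}$.
   Context: $\mathbb R^3_0=\mathbb R^3\setminus\{0\}$, $\mu>0$. $L(x,v)=x\times v$ and $A(x,v)=v\times(x\times v)-\mu x/|x|$. Fix $L_0,A_0\in\mathbb R^3$ with $L_0\perp A_0$, $L_0\ne0$, $|A_0|<\mu$. With $k_1,k_2>0$, $V(x,v)=\tfrac{k_1}{2}|L(x,v)-L_0|^2+\tfrac{k_2}{2}|A(x,v)-A_0|^2$ on $\mathbb R^3_0\times\mathbb R^3$. *)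

theory Defs
  imports "HOL-Analysis.Analysis"
begin

definition Lmom :: "real^3 \<Rightarrow> real^3 \<Rightarrow> real^3" where
  "Lmom x v = cross3 x v"

definition Avec :: "real \<Rightarrow> real^3 \<Rightarrow> real^3 \<Rightarrow> real^3" where
  "Avec \<mu> x v = cross3 v (cross3 x v) - (\<mu> / norm x) *\<^sub>R x"

definition Vfun :: "real \<Rightarrow> real \<Rightarrow> real \<Rightarrow> real^3 \<Rightarrow> real^3 \<Rightarrow> (real^3) * (real^3) \<Rightarrow> real" where
  "Vfun \<mu> k1 k2 L0 A0 p =
     k1 / 2 * (norm (Lmom (fst p) (snd p) - L0))\<^sup>2
   + k2 / 2 * (norm (Avec \<mu> (fst p) (snd p) - A0))\<^sup>2"

definition phase_space :: "((real^3) * (real^3)) set" where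
  "phase_space = {p. fst p \<noteq> 0}"

definition critical_point :: "('a::real_normed_vector \<Rightarrow> real) \<Rightarrow> 'a \<Rightarrow> bool" where
  "critical_point f p \<longleftrightarrow> (f has_derivative (\<lambda>h. 0)) (at p)"

end

theory Submission
  imports Defs
begin


lemma cross_bb: "bounded_bilinear cross3"
  using bilinear_cross bilinear_conv_bounded_bilinear by blast

lemmas has_derivative_cross3 = bounded_bilinear.FDERIV[OF cross_bb]

definition dA :: "real \<Rightarrow> real^3 \<Rightarrow> real^3 \<Rightarrow> real^3 \<Rightarrow> real^3 \<Rightarrow> real^3" where
 "dA \<mu> x v a b = cross3 b (cross3 x v) + cross3 v (cross3 a v + cross3 x b)
    - ((\<mu> / norm x) *\<^sub>R a - (\<mu> * (x \<bullet> a) / norm x ^ 3) *\<^sub>R x)"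

lemma norm_fst_deriv:
  assumes "x \<noteq> 0"
  shows "((\<lambda>p::(real^3)*(real^3). norm (fst p)) has_derivative (\<lambda>h. fst h \<bullet> sgn x)) (at (x,v))"
  using has_derivative_compose[OF has_derivative_fst[OF has_derivative_ident, of "at (x,v)"] has_derivative_norm[of "fst (x,v)"]] assms
  by simp

lemma V_deriv:
  assumes "x \<noteq> 0"
  shows "(Vfun \<mu> k1 k2 L0 A0 has_derivative
     (\<lambda>h. k1 * ((Lmom x v - L0) \<bullet> (cross3 (fst h) v + cross3 x (snd h)))
        + k2 * ((Avec \<mu> x v - A0) \<bullet> dA \<mu> x v (fst h) (snd h)))) (at (x,v))"
proof -
  have nx: "norm (fst (x,v)) \<noteq> 0" using assms by simp
  show ?thesis
  unfolding Vfun_def Lmom_def Avec_def power2_norm_eq_inner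
  apply (rule has_derivative_eq_rhs)
   apply (rule derivative_eq_intros has_derivative_cross3 norm_fst_deriv[OF assms] assms nx refl)+
  apply (rule ext)
  apply (simp add: dA_def sgn_div_norm algebra_simps inner_commute)
  apply (simp add: divide_inverse power3_eq_cube algebra_simps)
  done
qed


lemma triple1: "(a::real^3) \<bullet> cross3 b c = b \<bullet> cross3 c a"
  by (simp add: cross3_simps forall_3)
lemma triple2: "(a::real^3) \<bullet> cross3 b c = c \<bullet> cross3 a b"
  by (simp add: cross3_simps forall_3)
lemma bac: "cross3 a (cross3 b c) = (a \<bullet> c) *\<^sub>R b - (a \<bullet> b) *\<^sub>R (c::real^3)"
  by (simp add: cross3_simps forall_3)
lemma decomp: "(a \<bullet> cross3 b c) *\<^sub>R (z::real^3) = (z \<bullet> a) *\<^sub>R cross3 b c + (z \<bullet> b) *\<^sub>R cross3 c a + (z \<bullet> c) *\<^sub>R cross3 a b"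
  by (simp add: cross3_simps forall_3)



lemma inner_two: "(q::real^3) \<bullet> (2 * y) = 2 * (q \<bullet> y)"
  by (simp add: inner_vec_def sum_3 algebra_simps)

lemma key:
  fixes x v p q :: "real^3"
  assumes x0: "x \<noteq> 0" and Ln0: "cross3 x v \<noteq> 0"
    and D: "\<And>a b. p \<bullet> (cross3 a v + cross3 x b) + q \<bullet> dA \<mu> x v a b = 0"
  shows "\<exists>t. p = t *\<^sub>R Avec \<mu> x v \<and> q = t *\<^sub>R cross3 x v"
proof -
  define L where "L = cross3 x v"
  define r where "r = norm x"
  have r0: "r > 0" using x0 by (simp add: r_def)
  have rr: "x \<bullet> x = r^2" by (simp add: r_def power2_norm_eq_inner)
  have r3: "r^3 = r * r^2" by (simp add: power3_eq_cube power2_eq_square)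
  have LL: "L \<bullet> L > 0" using Ln0 by (simp add: L_def)
  define C1 where "C1 = cross3 p x + cross3 L q + cross3 (cross3 q v) x"
  define C2 where "C2 = cross3 v p + cross3 v (cross3 q v) - (\<mu>/r) *\<^sub>R (q - ((x \<bullet> q)/r^2) *\<^sub>R x)"
  have D1: "p \<bullet> (cross3 0 v + cross3 x b) + q \<bullet> dA \<mu> x v 0 b = b \<bullet> C1" for b
    unfolding C1_def L_def dA_def by (simp add: cross3_simps forall_3)
  have D2: "p \<bullet> (cross3 a v + cross3 x 0) + q \<bullet> dA \<mu> x v a 0 = a \<bullet> C2" for a
  proof -
    have e1: "p \<bullet> cross3 a v = a \<bullet> cross3 v p" by (metis triple1)
    have e2: "q \<bullet> cross3 v (cross3 a v) = a \<bullet> cross3 v (cross3 q v)"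
      using triple2[of q v "cross3 a v"] triple2[of a v "cross3 q v"] by (simp add: inner_commute)
    have e3: "q \<bullet> ((\<mu> / r) *\<^sub>R a - (\<mu> * (x \<bullet> a) / r ^ 3) *\<^sub>R x)
        = a \<bullet> ((\<mu>/r) *\<^sub>R (q - ((x \<bullet> q)/r^2) *\<^sub>R x))"
      using r0 by (simp add: inner_diff_right inner_diff_left r3 inner_commute field_simps)
    show ?thesis unfolding C2_def dA_def r_def[symmetric]
      using e1 e2 e3 by (simp add: inner_diff_right inner_add_right)
  qed
  have C1z: "C1 = 0" using D[of 0 C1] D1[of C1] by simp
  have C2z: "C2 = 0" using D[of C2 0] D2[of C2] by simp
  have s1: "q \<bullet> cross3 x L = 0"
  proof -
    have "x \<bullet> C1 = 0" using C1z by simp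
    moreover have "x \<bullet> C1 = q \<bullet> cross3 x L"
      unfolding C1_def by (simp add: inner_add_right dot_cross_self) (metis triple1 triple2)
    ultimately show ?thesis by simp
  qed
  have s2: "p \<bullet> L + 2 * (q \<bullet> cross3 v L) = 0"
    using D[of 0 v] unfolding dA_def L_def by (simp add: inner_add_right inner_two)
  have s3: "p \<bullet> L + q \<bullet> cross3 v L = 0"
  proof -
    have h: "(\<mu> / norm x) *\<^sub>R x - (\<mu> * (x \<bullet> x) / norm x ^ 3) *\<^sub>R x = 0"
      using r0 unfolding r_def[symmetric] rr r3 by (simp add: field_simps)
    have "p \<bullet> (cross3 x v + cross3 x 0) + q \<bullet> dA \<mu> x v x 0 = 0" using D[of x 0] .
    then show ?thesis unfolding dA_def L_def h by (simp add: inner_add_right)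
  qed
  have s4: "q \<bullet> cross3 v L = 0" using s2 s3 by simp
  define z where "z = cross3 q L"
  have z0: "z = 0"
  proof -
    have a1: "z \<bullet> x = 0" unfolding z_def using s1 triple1[of x q L] cross_skew[of L x] by (simp add: inner_commute)
    have a2: "z \<bullet> v = 0" unfolding z_def using s4 triple1[of v q L] cross_skew[of L v] by (simp add: inner_commute)
    have a3: "z \<bullet> L = 0" unfolding z_def by (simp add: dot_cross_self)
    have "(x \<bullet> cross3 v L) *\<^sub>R z = 0" using decomp[of x v L z] a1 a2 a3 by simp
    moreover have "x \<bullet> cross3 v L = L \<bullet> L" unfolding L_def by (metis triple2)
    ultimately show ?thesis using LL by simp
  qed
  define t where "t = (L \<bullet> q) / (L \<bullet> L)"
  have qt: "q = t *\<^sub>R L"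
  proof -
    have "cross3 L (cross3 q L) = 0" using z0 by (simp add: z_def)
    then have e: "(L \<bullet> L) *\<^sub>R q = (L \<bullet> q) *\<^sub>R L" by (simp add: bac)
    have "q = (1/(L \<bullet> L)) *\<^sub>R ((L \<bullet> L) *\<^sub>R q)" using LL by simp
    also have "\<dots> = t *\<^sub>R L" unfolding e t_def by simp
    finally show ?thesis .
  qed
  define w where "w = p + cross3 q v"
  have wx: "cross3 w x = 0"
    using C1z unfolding C1_def w_def qt by (simp add: cross_add_left cross_mult_left cross_mult_right)
  define s where "s = (x \<bullet> w) / r^2"
  have ws: "w = s *\<^sub>R x"
  proof -
    have "cross3 x (cross3 w x) = 0" using wx by simp
    then have e: "(x \<bullet> x) *\<^sub>R w = (x \<bullet> w) *\<^sub>R x" by (simp add: bac)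
    have "w = (1/(x \<bullet> x)) *\<^sub>R ((x \<bullet> x) *\<^sub>R w)" using x0 by simp
    also have "\<dots> = ((x \<bullet> w)/(x \<bullet> x)) *\<^sub>R x" unfolding e by simp
    also have "\<dots> = s *\<^sub>R x" unfolding s_def rr ..
    finally show ?thesis .
  qed
  have xq: "x \<bullet> q = 0" unfolding qt L_def by (simp add: dot_cross_self)
  have "C2 = cross3 v w - (\<mu>/r) *\<^sub>R q"
    unfolding C2_def w_def xq by (simp add: cross_add_right)
  also have "\<dots> = - (s + \<mu> * t / r) *\<^sub>R L"
    unfolding ws qt L_def by (simp add: cross_mult_right algebra_simps cross_skew[of v x])
  finally have "(s + \<mu> * t / r) *\<^sub>R L = 0" using C2z by auto
  then have st: "s = - \<mu> * t / r" using Ln0 unfolding L_def by simp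
  have "p = w - cross3 q v" by (simp add: w_def)
  also have "\<dots> = t *\<^sub>R Avec \<mu> x v"
    unfolding ws st qt Avec_def L_def r_def
    by (simp add: cross_mult_left cross_skew[of "cross3 x v" v] algebra_simps)
  finally show ?thesis using qt L_def by blast
qed



lemma LA_orth: "Lmom x v \<bullet> Avec \<mu> x v = 0"
  unfolding Lmom_def Avec_def
  by (simp add: inner_diff_right dot_cross_self)

theorem lemma7:
  fixes \<mu> k1 k2 c :: real and L0 A0 :: "real^3"
  assumes "\<mu> > 0" and "k1 > 0" and "k2 > 0"
    and "L0 \<bullet> A0 = 0" and "L0 \<noteq> 0" and "norm A0 < \<mu>"
    and "0 < c" and "c < min (k1 * (norm L0)\<^sup>2 / 2) (k2 * (\<mu> - norm A0)\<^sup>2 / 2)"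
  shows "{p \<in> phase_space. Vfun \<mu> k1 k2 L0 A0 p \<in> {0..c} \<and> critical_point (Vfun \<mu> k1 k2 L0 A0) p}
           = {p \<in> phase_space. Vfun \<mu> k1 k2 L0 A0 p = 0}
       \<and> {p \<in> phase_space. Vfun \<mu> k1 k2 L0 A0 p = 0}
           = {p \<in> phase_space. Lmom (fst p) (snd p) = L0 \<and> Avec \<mu> (fst p) (snd p) = A0}"
proof -
  note k1 = \<open>k1 > 0\<close> and k2 = \<open>k2 > 0\<close>
  let ?V = "Vfun \<mu> k1 k2 L0 A0"
  have nn1: "0 \<le> k1 / 2 * (norm (Lmom x v - L0))\<^sup>2" for x v using k1 by simp
  have nn2: "0 \<le> k2 / 2 * (norm (Avec \<mu> x v - A0))\<^sup>2" for x v using k2 by simp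
  have Vnn: "?V p \<ge> 0" for p unfolding Vfun_def using nn1 nn2 by (simp add: add_nonneg_nonneg)
  have V0iff: "?V p = 0 \<longleftrightarrow> Lmom (fst p) (snd p) = L0 \<and> Avec \<mu> (fst p) (snd p) = A0" for p
  proof -
    have "?V p = 0 \<longleftrightarrow> k1 / 2 * (norm (Lmom (fst p) (snd p) - L0))\<^sup>2 = 0
        \<and> k2 / 2 * (norm (Avec \<mu> (fst p) (snd p) - A0))\<^sup>2 = 0"
      unfolding Vfun_def using nn1 nn2 by (simp add: add_nonneg_eq_0_iff)
    also have "\<dots> \<longleftrightarrow> Lmom (fst p) (snd p) = L0 \<and> Avec \<mu> (fst p) (snd p) = A0"
      using k1 k2 by simp
    finally show ?thesis .
  qed
  have crit0: "critical_point ?V p" if "fst p \<noteq> 0" "?V p = 0" for p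
  proof -
    obtain x v where p: "p = (x, v)" by (cases p)
    have "Lmom x v = L0" "Avec \<mu> x v = A0" using V0iff[of p] that p by auto
    then show ?thesis using V_deriv[of x \<mu> k1 k2 L0 A0 v] that p
      unfolding critical_point_def by simp
  qed
  have crit1: "?V p = 0" if "fst p \<noteq> 0" "?V p \<le> c" "critical_point ?V p" for p
  proof -
    obtain x v where p: "p = (x, v)" by (cases p)
    have x0: "x \<noteq> 0" using that p by simp
    define P where "P = Lmom x v - L0"
    define Q where "Q = Avec \<mu> x v - A0"
    have D: "(\<lambda>h. k1 * (P \<bullet> (cross3 (fst h) v + cross3 x (snd h)))
        + k2 * (Q \<bullet> dA \<mu> x v (fst h) (snd h))) = (\<lambda>h. 0)"
      using has_derivative_unique[OF V_deriv[OF x0] that(3)[unfolded critical_point_def p]]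
      unfolding P_def Q_def .
    have D': "(k1 *\<^sub>R P) \<bullet> (cross3 a v + cross3 x b) + (k2 *\<^sub>R Q) \<bullet> dA \<mu> x v a b = 0" for a b
      using fun_cong[OF D, of "(a,b)"] by simp
    have Ln0: "cross3 x v \<noteq> 0"
    proof
      assume "cross3 x v = 0"
      then have "k1 / 2 * (norm L0)\<^sup>2 \<le> ?V p"
        unfolding p Vfun_def Lmom_def using nn2[of x v] by simp
      then show False using that(2) assms(8) by simp
    qed
    obtain t where t: "k1 *\<^sub>R P = t *\<^sub>R Avec \<mu> x v" "k2 *\<^sub>R Q = t *\<^sub>R cross3 x v"
      using key[OF x0 Ln0 D'] by blast
    define L where "L = Lmom x v"
    define A where "A = Avec \<mu> x v"
    have LA: "L \<bullet> A = 0" unfolding L_def A_def by (rule LA_orth)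
    have "P = (1/k1) *\<^sub>R (k1 *\<^sub>R P)" using k1 by simp
    then have P: "P = (t / k1) *\<^sub>R A" unfolding t(1) A_def by simp
    have "Q = (1/k2) *\<^sub>R (k2 *\<^sub>R Q)" using k2 by simp
    then have Q: "Q = (t / k2) *\<^sub>R L" unfolding t(2) L_def Lmom_def by simp
    have "L0 = L - P" "A0 = A - Q" unfolding P_def Q_def L_def A_def by simp_all
    then have "0 = (L - P) \<bullet> (A - Q)" using assms(4) by simp
    also have "\<dots> = - t * ((L \<bullet> L) / k2 + (A \<bullet> A) / k1)"
      unfolding P Q using LA by (simp add: inner_diff_left inner_diff_right inner_commute[of A L] algebra_simps)
    finally have t0: "t * ((L \<bullet> L) / k2 + (A \<bullet> A) / k1) = 0" by simp
    have "L \<bullet> L > 0" using Ln0 unfolding L_def Lmom_def by simp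
    moreover have "A \<bullet> A / k1 \<ge> 0" using k1 by simp
    ultimately have "(L \<bullet> L) / k2 + (A \<bullet> A) / k1 > 0" using k2 by (simp add: add_pos_nonneg)
    then have "t = 0" using t0 by simp
    then have "P = 0" "Q = 0" using P Q by simp_all
    then show ?thesis using V0iff[of p] p unfolding P_def Q_def by simp
  qed
  show ?thesis
  proof
    show "{p \<in> phase_space. ?V p \<in> {0..c} \<and> critical_point ?V p} = {p \<in> phase_space. ?V p = 0}"
    proof (rule set_eqI, rule iffI)
      fix p assume "p \<in> {p \<in> phase_space. ?V p \<in> {0..c} \<and> critical_point ?V p}"
      then show "p \<in> {p \<in> phase_space. ?V p = 0}" using crit1[of p] unfolding phase_space_def by simp
    next
      fix p assume "p \<in> {p \<in> phase_space. ?V p = 0}"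
      then show "p \<in> {p \<in> phase_space. ?V p \<in> {0..c} \<and> critical_point ?V p}"
        using crit0[of p] \<open>0 < c\<close> unfolding phase_space_def by simp
    qed
    show "{p \<in> phase_space. ?V p = 0}
           = {p \<in> phase_space. Lmom (fst p) (snd p) = L0 \<and> Avec \<mu> (fst p) (snd p) = A0}"
      using V0iff by blast
  qed
qed

end
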